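(* Let $\sigma:\mathbb{R}\to\mathbb{R}$ be continuous, let $K\subset\mathbb{R}^{d_{in}}$ be compact, and let $F:\mathbb{R}^{d_{in}}\to\mathbb{R}^{d_{out}}$ be a neural network function $F(x)=W_L(A_{L-1}\circ\dots\circ A_1(x))+b_L$ with $L$ layers, where $A_j(x)=\sigma(W_jx+b_j)$, $W_j\in\mathbb{R}^{d_j\times d_{j-1}}$, $b_j\in\mathbb{R}^{d_j}$, $d_0=d_{in}$, $d_L=d_{out}$, and width $\omega_F=\max\{d_1,\dots,d_L\}\le d_{in}$. Regard each $b_j$, $j=1,\dots,L-1$, as a vector in $\mathbb{R}^{d_{in}}$ by padding with zero components, and $W_L$ as a matrix in $\mathbb{R}^{d_{out}\times d_{in}}$ by padding with zero columns. Then for every $\varepsilon>0$ there exist invertible matrices $\tilde W_j\in\mathbb{R}^{d_{in}\times d_{in}}$, $j=1,\dots,L-1$, such that the function $\tilde F(x)=W_L(\tilde A_{L-1}\circ\dots\circ\tilde A_1(x))+b_L$ with $\tilde A_j(x)=\sigma(\tilde W_jx+b_j)$ satisfies $\|\tilde F-F\|_K<\varepsilon$.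
   Context: $\sigma$ is applied componentwise to vectors. For $f:K\to\mathbb{R}^m$, $\|f\|_K=\sup\{\|f(x)\|:x\in K\}$ with $\|\cdot\|$ the Euclidean norm. *)

theory Defs
  imports "HOL-Analysis.Analysis"
begin

text \<open>Vectors of R^k are represented as functions nat => real whose components
with index >= k are 0; a k x p matrix is a function nat => nat => real of which
only the entries (i,l) with i < k, l < p are used.\<close>

definition mat_vec :: "(nat \<Rightarrow> nat \<Rightarrow> real) \<Rightarrow> nat \<Rightarrow> nat \<Rightarrow> (nat \<Rightarrow> real) \<Rightarrow> (nat \<Rightarrow> real)" where
  "mat_vec W q p x = (\<lambda>i. if i < q then (\<Sum>k<p. W i k * x k) else 0)"

definition vec_add :: "nat \<Rightarrow> (nat \<Rightarrow> real) \<Rightarrow> (nat \<Rightarrow> real) \<Rightarrow> (nat \<Rightarrow> real)" where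
  "vec_add q x y = (\<lambda>i. if i < q then x i + y i else 0)"

definition layer :: "(real \<Rightarrow> real) \<Rightarrow> (nat \<Rightarrow> nat \<Rightarrow> real) \<Rightarrow> (nat \<Rightarrow> real) \<Rightarrow> nat \<Rightarrow> nat
    \<Rightarrow> (nat \<Rightarrow> real) \<Rightarrow> (nat \<Rightarrow> real)" where
  "layer \<sigma> W b p q x = (\<lambda>i. if i < q then \<sigma> (vec_add q (mat_vec W q p x) b i) else 0)"

fun hidden :: "(real \<Rightarrow> real) \<Rightarrow> (nat \<Rightarrow> nat \<Rightarrow> nat \<Rightarrow> real) \<Rightarrow> (nat \<Rightarrow> nat \<Rightarrow> real)
    \<Rightarrow> (nat \<Rightarrow> nat) \<Rightarrow> nat \<Rightarrow> (nat \<Rightarrow> real) \<Rightarrow> (nat \<Rightarrow> real)" where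
  "hidden \<sigma> W b d 0 x = x"
| "hidden \<sigma> W b d (Suc j) x = layer \<sigma> (W (Suc j)) (b (Suc j)) (d j) (d (Suc j)) (hidden \<sigma> W b d j x)"

definition network :: "(real \<Rightarrow> real) \<Rightarrow> (nat \<Rightarrow> nat \<Rightarrow> nat \<Rightarrow> real) \<Rightarrow> (nat \<Rightarrow> nat \<Rightarrow> real)
    \<Rightarrow> (nat \<Rightarrow> nat) \<Rightarrow> nat \<Rightarrow> (nat \<Rightarrow> real) \<Rightarrow> (nat \<Rightarrow> real)" where
  "network \<sigma> W b d L x =
     vec_add (d L) (mat_vec (W L) (d L) (d (L - 1)) (hidden \<sigma> W b d (L - 1) x)) (b L)"

definition pad_vec :: "nat \<Rightarrow> (nat \<Rightarrow> real) \<Rightarrow> (nat \<Rightarrow> real)" where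
  "pad_vec q v = (\<lambda>i. if i < q then v i else 0)"

definition pad_cols :: "nat \<Rightarrow> (nat \<Rightarrow> nat \<Rightarrow> real) \<Rightarrow> (nat \<Rightarrow> nat \<Rightarrow> real)" where
  "pad_cols p W = (\<lambda>i k. if k < p then W i k else 0)"

definition mat_invertible :: "nat \<Rightarrow> (nat \<Rightarrow> nat \<Rightarrow> real) \<Rightarrow> bool" where
  "mat_invertible n M \<longleftrightarrow> (\<exists>N.
     (\<forall>i<n. \<forall>k<n. (\<Sum>l<n. M i l * N l k) = (if i = k then 1 else 0)) \<and>
     (\<forall>i<n. \<forall>k<n. (\<Sum>l<n. N i l * M l k) = (if i = k then 1 else 0)))"

definition tilde_network :: "(real \<Rightarrow> real) \<Rightarrow> (nat \<Rightarrow> nat \<Rightarrow> nat \<Rightarrow> real) \<Rightarrow> (nat \<Rightarrow> nat \<Rightarrow> real)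
    \<Rightarrow> (nat \<Rightarrow> nat) \<Rightarrow> nat \<Rightarrow> nat \<Rightarrow> (nat \<Rightarrow> nat \<Rightarrow> nat \<Rightarrow> real) \<Rightarrow> (nat \<Rightarrow> real) \<Rightarrow> (nat \<Rightarrow> real)" where
  "tilde_network \<sigma> W b d L n Wt x =
     vec_add (d L)
       (mat_vec (pad_cols (d (L - 1)) (W L)) (d L) n
          (hidden \<sigma> Wt (\<lambda>j. pad_vec (d j) (b j)) (\<lambda>_. n) (L - 1) x))
       (b L)"

text \<open>Euclidean norm in R^m and sup norm over K (the insert 0 only matters for K = {},
all values being nonnegative).\<close>
definition euclid_norm :: "nat \<Rightarrow> (nat \<Rightarrow> real) \<Rightarrow> real" where
  "euclid_norm m v = sqrt (\<Sum>i<m. (v i)\<^sup>2)"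

definition sup_norm_on :: "(nat \<Rightarrow> real) set \<Rightarrow> nat \<Rightarrow> ((nat \<Rightarrow> real) \<Rightarrow> (nat \<Rightarrow> real)) \<Rightarrow> real" where
  "sup_norm_on K m f = Sup (insert 0 ((\<lambda>x. euclid_norm m (f x)) ` K))"

end

theory Submission
  imports Defs "Jordan_Normal_Form.Char_Poly"
begin

lemma det_inv:
  fixes M :: "nat \<Rightarrow> nat \<Rightarrow> real"
  assumes "Determinant.det (Matrix.mat n n (\<lambda>(i,k). M i k)) \<noteq> 0"
  shows "mat_invertible n M"
proof -
  let ?A = "Matrix.mat n n (\<lambda>(i,k). M i k)"
  have A: "?A \<in> carrier_mat n n" by simp
  let ?D = "Determinant.det ?A"
  define N where "N = (\<lambda>i k. adj_mat ?A $$ (i,k) / ?D)"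
  have adj: "adj_mat ?A \<in> carrier_mat n n" using adj_mat(1)[OF A] .
  have 1: "(\<Sum>l<n. M i l * N l k) = (if i = k then 1 else 0)" if "i<n" "k<n" for i k
  proof -
    have "(?A * adj_mat ?A) $$ (i,k) = (?D \<cdot>\<^sub>m 1\<^sub>m n) $$ (i,k)" using adj_mat(2)[OF A] by simp
    hence "(\<Sum>l<n. M i l * adj_mat ?A $$ (l,k)) = ?D * (if i = k then 1 else 0)"
      using that adj by (simp add: scalar_prod_def atLeast0LessThan)
    hence "(\<Sum>l<n. M i l * adj_mat ?A $$ (l,k)) / ?D = (if i = k then 1 else 0)"
      using assms by simp
    thus ?thesis unfolding N_def by (simp add: sum_divide_distrib)
  qed
  have 2: "(\<Sum>l<n. N i l * M l k) = (if i = k then 1 else 0)" if "i<n" "k<n" for i k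
  proof -
    have "(adj_mat ?A * ?A) $$ (i,k) = (?D \<cdot>\<^sub>m 1\<^sub>m n) $$ (i,k)" using adj_mat(3)[OF A] by simp
    hence "(\<Sum>l<n. adj_mat ?A $$ (i,l) * M l k) = ?D * (if i = k then 1 else 0)"
      using that adj by (simp add: scalar_prod_def atLeast0LessThan)
    hence "(\<Sum>l<n. adj_mat ?A $$ (i,l) * M l k) / ?D = (if i = k then 1 else 0)"
      using assms by simp
    thus ?thesis unfolding N_def by (simp add: sum_divide_distrib)
  qed
  show ?thesis unfolding mat_invertible_def using 1 2 by blast
qed

lemma finite_sing:
  fixes M :: "nat \<Rightarrow> nat \<Rightarrow> real"
  shows "finite {\<delta>. \<not> mat_invertible n (\<lambda>i k. M i k + (if i = k then \<delta> else 0))}"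
proof -
  let ?B = "- Matrix.mat n n (\<lambda>(i,k). M i k)"
  have B: "?B \<in> carrier_mat n n" by simp
  have nz: "char_poly ?B \<noteq> 0" using degree_monic_char_poly[OF B] by auto
  have "{\<delta>. \<not> mat_invertible n (\<lambda>i k. M i k + (if i = k then \<delta> else 0))} \<subseteq> {\<delta>. poly (char_poly ?B) \<delta> = 0}"
  proof
    fix \<delta> assume "\<delta> \<in> {\<delta>. \<not> mat_invertible n (\<lambda>i k. M i k + (if i = k then \<delta> else 0))}"
    hence ni: "\<not> mat_invertible n (\<lambda>i k. M i k + (if i = k then \<delta> else 0))" by simp
    have eq: "- (char_matrix ?B \<delta>) = Matrix.mat n n (\<lambda>(i,k). M i k + (if i = k then \<delta> else 0))"
      by (rule eq_matI) (auto simp: char_matrix_def)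
    show "\<delta> \<in> {\<delta>. poly (char_poly ?B) \<delta> = 0}"
    proof -
      have "poly (char_poly ?B) \<delta> = Determinant.det (Matrix.mat n n (\<lambda>(i,k). M i k + (if i = k then \<delta> else 0)))"
        by (simp only: char_poly_matrix[OF B] eq)
      thus ?thesis using ni det_inv[of n "\<lambda>i k. M i k + (if i = k then \<delta> else 0)"] by auto
    qed
  qed
  moreover have "finite {\<delta>. poly (char_poly ?B) \<delta> = 0}" using poly_roots_finite[OF nz] .
  ultimately show ?thesis by (rule finite_subset)
qed
lemma hidden_cont:
  fixes f :: "'a::topological_space \<Rightarrow> real" and h :: "'a \<Rightarrow> nat \<Rightarrow> real"
  assumes "continuous_on UNIV \<sigma>" "continuous_on UNIV f" "continuous_on UNIV h"
  shows "continuous_on UNIV (\<lambda>p.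
     hidden \<sigma> (\<lambda>j i k. M j i k + (if i = k then f p else 0)) c (\<lambda>_. n) j (h p) i)"
proof (induction j arbitrary: i)
  case 0
  show ?case by (simp add: continuous_on_product_then_coordinatewise[OF assms(3)])
next
  case (Suc j)
  show ?case
  proof (cases "i < n")
    case True
    show ?thesis using True
      apply (simp add: layer_def vec_add_def mat_vec_def)
      apply (intro continuous_on_compose2[OF assms(1)] continuous_intros Suc.IH)
      subgoal for k by (cases "i = k") (auto intro: continuous_intros assms(2))
      by auto
  next
    case False
    thus ?thesis by (simp add: layer_def)
  qed
qed

lemma sum_if_less:
  fixes f :: "nat \<Rightarrow> real"
  assumes "m \<le> n"
  shows "(\<Sum>k<n. (if k < m then a k else 0) * f k) = (\<Sum>k<m. a k * f k)"
proof -
  have "(\<Sum>k<n. (if k < m then a k else 0) * f k) = (\<Sum>k<n. if k < m then a k * f k else 0)"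
    by (intro sum.cong) auto
  also have "\<dots> = (\<Sum>k\<in>{k\<in>{..<n}. k < m}. a k * f k)" by (rule sum.inter_filter[symmetric]) simp
  also have "{k\<in>{..<n}. k < m} = {..<m}" using assms by auto
  finally show ?thesis .
qed

lemma hidden_agree:
  assumes "d 0 = n" "\<forall>j\<in>{1..L}. d j \<le> n"
  shows "j < L \<Longrightarrow> i < d j \<Longrightarrow>
    hidden \<sigma> (\<lambda>j i k. (if i < d j \<and> k < d (j - 1) then W j i k else 0) + (if i = k then (0::real) else 0))
       (\<lambda>j. pad_vec (d j) (b j)) (\<lambda>_. n) j x i = hidden \<sigma> W b d j x i"
proof (induction j arbitrary: i)
  case 0
  then show ?case by simp
next
  case (Suc j)
  have dj: "d j \<le> n" using assms Suc.prems by (cases j) auto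
  have dS: "d (Suc j) \<le> n" using assms Suc.prems by auto
  have i: "i < n" using dS Suc.prems by simp
  have "(\<Sum>k<n. (if k < d j then W (Suc j) i k else 0) *
          hidden \<sigma> (\<lambda>j i k. (if i < d j \<and> k < d (j - 1) then W j i k else 0) + (if i = k then (0::real) else 0))
       (\<lambda>j. pad_vec (d j) (b j)) (\<lambda>_. n) j x k)
     = (\<Sum>k<d j. W (Suc j) i k * hidden \<sigma> W b d j x k)"
    using Suc.IH Suc.prems by (simp add: sum_if_less[OF dj])
  then show ?case using Suc.prems i by (simp add: layer_def vec_add_def mat_vec_def pad_vec_def)
qed

theorem proposition8:
  fixes \<sigma> :: "real \<Rightarrow> real"
    and K :: "(nat \<Rightarrow> real) set"
    and W :: "nat \<Rightarrow> nat \<Rightarrow> nat \<Rightarrow> real"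
    and b :: "nat \<Rightarrow> nat \<Rightarrow> real"
    and d :: "nat \<Rightarrow> nat"
    and L d_in d_out :: nat
  assumes "continuous_on UNIV \<sigma>"
    and "compact K"
    and "K \<subseteq> {x. \<forall>i\<ge>d_in. x i = 0}"
    and "L \<ge> 1"
    and "d 0 = d_in"
    and "d L = d_out"
    and "\<forall>j\<in>{1..L}. d j \<le> d_in"
    and "\<epsilon> > 0"
  shows "\<exists>Wt :: nat \<Rightarrow> nat \<Rightarrow> nat \<Rightarrow> real.
           (\<forall>j\<in>{1..L-1}. mat_invertible d_in (Wt j)) \<and>
           sup_norm_on K d_out
             (\<lambda>x. (\<lambda>i. tilde_network \<sigma> W b d L d_in Wt x i - network \<sigma> W b d L x i)) < \<epsilon>"
proof -
  note cs = assms(1)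
  define M where "M = (\<lambda>j i k. if i < d j \<and> k < d (j - 1) then W j i k else (0::real))"
  define T where "T = (\<lambda>\<delta> x. tilde_network \<sigma> W b d L d_in (\<lambda>j i k. M j i k + (if i = k then \<delta> else 0)) x)"
  have dL: "d (L - 1) \<le> d_in" using assms by (cases "L - 1") auto
  have netT0: "network \<sigma> W b d L x = T 0 x" for x
  proof
    fix i
    have "(\<Sum>k<d_in. (if k < d (L - 1) then W L i k else 0) *
          hidden \<sigma> (\<lambda>j i k. M j i k + (if i = k then (0::real) else 0)) (\<lambda>j. pad_vec (d j) (b j)) (\<lambda>_. d_in) (L - 1) x k)
       = (\<Sum>k<d (L - 1). W L i k * hidden \<sigma> W b d (L - 1) x k)"
      unfolding sum_if_less[OF dL]
      using hidden_agree[of d d_in L "L - 1" _ \<sigma> W b x] assms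
      by (intro sum.cong refl) (simp add: M_def)
    thus "network \<sigma> W b d L x i = T 0 x i"
      by (simp add: network_def T_def tilde_network_def vec_add_def mat_vec_def pad_cols_def)
  qed
  have Tcont: "continuous_on UNIV (\<lambda>p. T (f p) (h p) i)"
    if f: "continuous_on UNIV f" and h: "continuous_on UNIV h" for f :: "real \<times> (nat \<Rightarrow> real) \<Rightarrow> real" and h i
    unfolding T_def tilde_network_def vec_add_def mat_vec_def
    by (cases "i < d L") (simp_all, intro continuous_intros hidden_cont cs f h)
  define g where "g = (\<lambda>p::real \<times> (nat \<Rightarrow> real). euclid_norm d_out (\<lambda>i. T (fst p) (snd p) i - T 0 (snd p) i))"
  have gcont: "continuous_on UNIV g"
    unfolding g_def euclid_norm_def
    by (intro continuous_intros Tcont continuous_on_fst continuous_on_snd continuous_on_id)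
  define U where "U = {p. g p < \<epsilon> / 2}"
  have oU: "open U" unfolding U_def by (intro open_Collect_less gcont continuous_on_const)
  have sK: "{0} \<times> K \<subseteq> U"
  proof
    fix p :: "real \<times> (nat \<Rightarrow> real)" assume "p \<in> {0} \<times> K"
    then obtain x where px: "p = (0, x)" by blast
    show "p \<in> U" unfolding U_def g_def euclid_norm_def px using assms(8) by simp
  qed
  obtain X0 where X0: "0 \<in> X0" "open X0" "X0 \<times> K \<subseteq> U"
    using Elementary_Topology.tube_lemma[OF assms(2) oU sK] by blast
  from X0(2) have "\<forall>x\<in>X0. \<exists>e>0. ball x e \<subseteq> X0" by (simp add: open_contains_ball)
  with X0(1) obtain \<eta> where eta: "\<eta> > 0" "ball 0 \<eta> \<subseteq> X0" by blast
  define S where "S = (\<Union>j\<in>{1..L-1}. {\<delta>. \<not> mat_invertible d_in (\<lambda>i k. M j i k + (if i = k then \<delta> else 0))})"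
  have fS: "finite S" unfolding S_def by (rule finite_UN_I[OF finite_atLeastAtMost finite_sing])
  have iI: "infinite {0<..<\<eta>}" using eta(1) by (rule infinite_Ioo)
  have "infinite ({0<..<\<eta>} - S)" by (rule Diff_infinite_finite[OF fS iI])
  hence "{0<..<\<eta>} - S \<noteq> {}" by (metis finite.emptyI)
  then obtain \<delta> where del: "\<delta> \<in> {0<..<\<eta>}" "\<delta> \<notin> S" by blast
  define Wt where "Wt = (\<lambda>j i k. M j i k + (if i = k then \<delta> else 0))"
  have inv: "\<forall>j\<in>{1..L-1}. mat_invertible d_in (Wt j)"
  proof
    fix j assume "j \<in> {1..L-1}"
    thus "mat_invertible d_in (Wt j)" using del(2) unfolding S_def Wt_def by simp
  qed
  have "\<delta> \<in> X0" using del(1) eta(2) by (auto simp: dist_real_def)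
  hence lt: "g (\<delta>, x) < \<epsilon> / 2" if "x \<in> K" for x using X0(3) that unfolding U_def by blast
  have "sup_norm_on K d_out (\<lambda>x. (\<lambda>i. tilde_network \<sigma> W b d L d_in Wt x i - network \<sigma> W b d L x i)) \<le> \<epsilon> / 2"
    unfolding sup_norm_on_def
  proof (rule cSup_least)
    fix y assume "y \<in> insert 0 ((\<lambda>x. euclid_norm d_out (\<lambda>i. tilde_network \<sigma> W b d L d_in Wt x i - network \<sigma> W b d L x i)) ` K)"
    then show "y \<le> \<epsilon> / 2"
    proof
      assume "y = 0" thus ?thesis using assms(8) by simp
    next
      assume "y \<in> (\<lambda>x. euclid_norm d_out (\<lambda>i. tilde_network \<sigma> W b d L d_in Wt x i - network \<sigma> W b d L x i)) ` K"
      then obtain x where x: "x \<in> K" and y: "y = euclid_norm d_out (\<lambda>i. tilde_network \<sigma> W b d L d_in Wt x i - network \<sigma> W b d L x i)" by blast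
      have "y = g (\<delta>, x)" unfolding y g_def netT0 by (simp add: T_def Wt_def)
      thus ?thesis using lt[OF x] by simp
    qed
  qed simp
  thus ?thesis using inv assms(8) by (intro exI[of _ Wt]) auto
qed

end
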